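(* Let $A=\{a_1,\dots,a_k\}$ be a finite nonempty set and $M\le A^A$ a monoid. The following are equivalent: (i) $M$ is u-closed (equivalently, $M^{*}$ is a clone); (ii) $M^{*}=\mathrm{Pol}\,\Gamma_M$; (iii) $C\subseteq M$ and for every binary $f\in M^{*}$ the unary map $x\mapsto f(x,x)$ belongs to $M$; (iv) $\Gamma_M$ is a generalized quasiorder.
   Context: $C$ is the set of all constant unary maps on $A$. $\Gamma_M:=\{(g a_1,\dots,g a_k)\mid g\in M\}\subseteq A^k$. $\mathrm{Pol}\,\rho$ is the set of all finitary operations on $A$ preserving $\rho$ (componentwise application to tuples of $\rho$ gives a tuple of $\rho$). A translation of an $n$-ary $f$ is a unary map $x\mapsto f(b_1,\dots,b_{i-1},x,b_{i+1},\dots,b_n)$ with fixed $b_j\in A$; $\mathrm{trl}(f)$ is the set of translations of $f$ ($\{f\}$ if $f$ is unary); $M^*:=\{f\mid\mathrm{trl}(f)\subseteq M\}$. The u-closure $\overline M$ is the intersection of all monoids $N$ with $M\subseteq N\le A^A$ such that $N^*$ is a clone; $M$ is u-closed if $\overline M=M$. A relation $\rho\subseteq A^m$ is a generalized quasiorder if it is reflexive and, for every $m\times m$-matrix over $A$ whose rows and columns all lie in $\rho$, its diagonal lies in $\rho$. *)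

theory Defs
  imports Main
begin

text \<open>The base set A is the (finite, nonempty) universe of a type 'a::finite.
  An n-ary operation (n >= 1) is a pair (n, f) with f :: 'a list => 'a, of which only
  the values on lists of length n matter; all sets of operations below are closed under
  changing f outside lists of length n.  An m-ary relation is a set of lists of length m.\<close>

type_synonym 'a op = "nat \<times> ('a list \<Rightarrow> 'a)"

definition is_monoid :: "('a \<Rightarrow> 'a) set \<Rightarrow> bool" where
  "is_monoid M \<longleftrightarrow> id \<in> M \<and> (\<forall>f\<in>M. \<forall>g\<in>M. f \<circ> g \<in> M)"

definition constants :: "('a \<Rightarrow> 'a) set" where
  "constants = {(\<lambda>x. c) | c. True}"

definition trl :: "'a op \<Rightarrow> ('a \<Rightarrow> 'a) set" where
  "trl F = {(\<lambda>x. snd F (bs[i := x])) | bs i. length bs = fst F \<and> i < fst F}"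

definition star :: "('a \<Rightarrow> 'a) set \<Rightarrow> 'a op set" where
  "star M = {F. fst F \<ge> 1 \<and> trl F \<subseteq> M}"

definition is_clone :: "'a op set \<Rightarrow> bool" where
  "is_clone F \<longleftrightarrow>
     (\<forall>G\<in>F. fst G \<ge> 1) \<and>
     (\<forall>n i. 1 \<le> n \<and> i < n \<longrightarrow> (n, \<lambda>xs. xs ! i) \<in> F) \<and>
     (\<forall>n f m gs. (n, f) \<in> F \<and> m \<ge> 1 \<and> length gs = n \<and> (\<forall>g\<in>set gs. (m, g) \<in> F)
        \<longrightarrow> (m, \<lambda>xs. f (map (\<lambda>g. g xs) gs)) \<in> F)"

definition u_closure :: "('a \<Rightarrow> 'a) set \<Rightarrow> ('a \<Rightarrow> 'a) set" where
  "u_closure M = \<Inter> {N. M \<subseteq> N \<and> is_monoid N \<and> is_clone (star N)}"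

definition u_closed :: "('a \<Rightarrow> 'a) set \<Rightarrow> bool" where
  "u_closed M \<longleftrightarrow> u_closure M = M"

definition Gamma :: "'a list \<Rightarrow> ('a \<Rightarrow> 'a) set \<Rightarrow> 'a list set" where
  "Gamma as M = {map g as | g. g \<in> M}"

definition Pol :: "nat \<Rightarrow> 'a list set \<Rightarrow> 'a op set" where
  "Pol m \<rho> = {F. fst F \<ge> 1 \<and>
     (\<forall>rs. length rs = fst F \<and> set rs \<subseteq> \<rho> \<longrightarrow>
        map (\<lambda>j. snd F (map (\<lambda>r. r ! j) rs)) [0..<m] \<in> \<rho>)}"

definition gen_quasiorder :: "nat \<Rightarrow> 'a list set \<Rightarrow> bool" where
  "gen_quasiorder m \<rho> \<longleftrightarrow>
     (\<forall>a. replicate m a \<in> \<rho>) \<and>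
     (\<forall>X :: nat \<Rightarrow> nat \<Rightarrow> 'a.
        (\<forall>i<m. map (\<lambda>j. X i j) [0..<m] \<in> \<rho>) \<and> (\<forall>j<m. map (\<lambda>i. X i j) [0..<m] \<in> \<rho>)
        \<longrightarrow> map (\<lambda>i. X i i) [0..<m] \<in> \<rho>)"

end

theory Submission
  imports Defs
begin


lemma trl_memI: "length bs = n \<Longrightarrow> i < n \<Longrightarrow> (\<lambda>x. f (bs[i := x])) \<in> trl (n, f)"
  unfolding trl_def by auto

lemma trl_unary: "trl (1, f) = {\<lambda>x. f [x]}"
proof (intro equalityI subsetI)
  fix t assume "t \<in> trl (1, f)"
  then obtain bs i where "t = (\<lambda>x. f (bs[i := x]))" "length bs = 1" "i < 1" by (auto simp: trl_def)
  moreover from \<open>length bs = 1\<close> obtain b where "bs = [b]" by (auto simp: length_Suc_conv)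
  ultimately show "t \<in> {\<lambda>x. f [x]}" by simp
next
  fix t assume "t \<in> {\<lambda>x. f [x]}"
  then have "t = (\<lambda>x. f ([undefined][0 := x]))" by simp
  moreover have "length [undefined] = 1" by simp
  ultimately show "t \<in> trl (1, f)" using trl_memI[of "[undefined]" 1 0 f] by simp
qed

lemma star_memI:
  assumes "n \<ge> 1" "\<And>bs i. length bs = n \<Longrightarrow> i < n \<Longrightarrow> (\<lambda>x. f (bs[i := x])) \<in> M"
  shows "(n, f) \<in> star M"
  using assms unfolding star_def trl_def by auto

lemma star_trl: "(n, f) \<in> star M \<Longrightarrow> length bs = n \<Longrightarrow> i < n \<Longrightarrow> (\<lambda>x. f (bs[i := x])) \<in> M"
  unfolding star_def trl_def by auto

lemma star_unary: "(1, f) \<in> star M \<longleftrightarrow> (\<lambda>x. f [x]) \<in> M"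
  unfolding star_def using trl_unary[of f] by simp

lemma map_eq_UNIV: "set as = UNIV \<Longrightarrow> map g as = map h as \<Longrightarrow> g = h"
  by (auto simp del: map_eq_conv simp add: map_eq_conv)

lemma star_Inter: "S \<noteq> {} \<Longrightarrow> F \<in> star (\<Inter>S) \<longleftrightarrow> (\<forall>N\<in>S. F \<in> star N)"
  unfolding star_def by auto

lemma clone_proj: "is_clone F \<Longrightarrow> 1 \<le> n \<Longrightarrow> i < n \<Longrightarrow> (n, \<lambda>xs. xs ! i) \<in> F"
  unfolding is_clone_def by simp

lemma clone_comp: "is_clone F \<Longrightarrow> (n, f) \<in> F \<Longrightarrow> 1 \<le> m \<Longrightarrow> length gs = n \<Longrightarrow>
   (\<forall>g\<in>set gs. (m, g) \<in> F) \<Longrightarrow> (m, \<lambda>xs. f (map (\<lambda>g. g xs) gs)) \<in> F"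
  unfolding is_clone_def by simp

lemma clone_Inter:
  assumes ne: "S \<noteq> {}" and cl: "\<forall>N\<in>S. is_clone (star N)"
  shows "is_clone (star (\<Inter>S))"
  unfolding is_clone_def
proof (intro conjI allI impI ballI)
  fix G assume "G \<in> star (\<Inter>S)" then show "1 \<le> fst G" by (simp add: star_def)
next
  fix n i :: nat assume h: "1 \<le> n \<and> i < n"
  have "\<forall>N\<in>S. (n, \<lambda>xs. xs ! i) \<in> star N"
  proof
    fix N assume "N \<in> S" then have "is_clone (star N)" using cl by blast
    then show "(n, \<lambda>xs. xs ! i) \<in> star N" using h clone_proj by blast
  qed
  then show "(n, \<lambda>xs. xs ! i) \<in> star (\<Inter>S)" using star_Inter[OF ne] by blast
next
  fix n f m gs assume h: "(n, f) \<in> star (\<Inter> S) \<and> 1 \<le> m \<and> length gs = n \<and> (\<forall>g\<in>set gs. (m, g) \<in> star (\<Inter> S))"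
  have "\<forall>N\<in>S. (m, \<lambda>xs. f (map (\<lambda>g. g xs) gs)) \<in> star N"
  proof
    fix N assume N: "N \<in> S" then have "is_clone (star N)" using cl by blast
    moreover have "(n, f) \<in> star N" "\<forall>g\<in>set gs. (m, g) \<in> star N"
      using h N star_Inter[OF ne] by blast+
    ultimately show "(m, \<lambda>xs. f (map (\<lambda>g. g xs) gs)) \<in> star N" using h clone_comp by blast
  qed
  then show "(m, \<lambda>xs. f (map (\<lambda>g. g xs) gs)) \<in> star (\<Inter>S)" using star_Inter[OF ne] by blast
qed

lemma clone_UNIV: "is_clone (star UNIV)"
  unfolding is_clone_def star_def by auto

lemma monoid_UNIV: "is_monoid UNIV"
  unfolding is_monoid_def by auto

lemma uclosed_iff:
  assumes mon: "is_monoid M"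
  shows "u_closed M \<longleftrightarrow> is_clone (star M)"
proof
  let ?S = "{N. M \<subseteq> N \<and> is_monoid N \<and> is_clone (star N)}"
  have ne: "?S \<noteq> {}" using clone_UNIV monoid_UNIV by blast
  assume "u_closed M"
  then have "\<Inter>?S = M" unfolding u_closed_def u_closure_def .
  moreover have "is_clone (star (\<Inter>?S))" using clone_Inter[OF ne] by blast
  ultimately show "is_clone (star M)" by simp
next
  assume "is_clone (star M)"
  then show "u_closed M" using mon unfolding u_closed_def u_closure_def by blast
qed



lemma diag_rep:
  fixes M :: "('a \<Rightarrow> 'a) set"
  assumes mon: "is_monoid M"
    and bin: "\<forall>f. (2, f) \<in> star M \<longrightarrow> (\<lambda>x. f [x, x]) \<in> M"
  shows "(n, f) \<in> star M \<Longrightarrow> (\<lambda>x. f (replicate n x)) \<in> M"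
proof (induction n arbitrary: f rule: nat_less_induct)
  case (1 n)
  show ?case
  proof (cases n)
    case 0 then show ?thesis using "1.prems" by (simp add: star_def)
  next
    case (Suc k) note nk = this
    show ?thesis
    proof (cases k)
      case 0
      have "(\<lambda>x. f ([undefined][0 := x])) \<in> M"
        using star_trl[OF "1.prems", of "[undefined]" 0] nk 0 by simp
      then show ?thesis using nk 0 by simp
    next
      case (Suc l)
      have kpos: "0 < k" using Suc by simp
      define f' where "f' = (\<lambda>xs. f (hd xs # xs))"
      have "(k, f') \<in> star M"
      proof (rule star_memI)
        show "1 \<le> k" using Suc by simp
      next
        fix bs :: "'a list" and i assume bs: "length bs = k" "i < k"
        then obtain b cs where bcs: "bs = b # cs" using Suc by (cases bs) auto
        show "(\<lambda>x. f' (bs[i := x])) \<in> M"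
        proof (cases i)
          case 0
          define g where "g = (\<lambda>ys. f (ys ! 0 # ys ! 1 # cs))"
          have "(2, g) \<in> star M"
          proof (rule star_memI)
            fix ys :: "'a list" and j assume ys: "length ys = (2::nat)" "j < (2::nat)"
            then obtain y0 y1 where y: "ys = [y0, y1]"
              by (metis One_nat_def Suc_1 length_0_conv length_Suc_conv)
            have len: "length (y0 # y1 # cs) = n" using bs bcs nk by simp
            show "(\<lambda>x. g (ys[j := x])) \<in> M"
            proof (cases j)
              case 0
              have "(\<lambda>x. f ((y0 # y1 # cs)[0 := x])) \<in> M"
                using star_trl[OF "1.prems" len, of 0] nk by simp
              then show ?thesis using 0 y by (simp add: g_def)
            next
              case (Suc j')
              then have "j = 1" using ys by simp
              have "(\<lambda>x. f ((y0 # y1 # cs)[1 := x])) \<in> M"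
                using star_trl[OF "1.prems" len, of 1] nk kpos by simp
              then show ?thesis using \<open>j = 1\<close> y by (simp add: g_def)
            qed
          qed simp
          then have "(\<lambda>x. g [x, x]) \<in> M" using bin by blast
          then show ?thesis using 0 bcs by (simp add: g_def f'_def)
        next
          case (Suc i')
          have len: "length (b # b # cs) = n" using bs bcs nk by simp
          have "(\<lambda>x. f ((b # b # cs)[Suc (Suc i') := x])) \<in> M"
            using star_trl[OF "1.prems" len, of "Suc (Suc i')"] nk bs Suc by simp
          then show ?thesis using Suc bcs by (simp add: f'_def)
        qed
      qed
      then have "(\<lambda>x. f' (replicate k x)) \<in> M" using "1.IH" nk by blast
      moreover have "\<And>x. f' (replicate k x) = f (replicate n x)"
        using Suc nk by (simp add: f'_def)
      ultimately show ?thesis by simp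
    qed
  qed
qed

lemma diag_map:
  fixes M :: "('a \<Rightarrow> 'a) set"
  assumes mon: "is_monoid M"
    and bin: "\<forall>f. (2, f) \<in> star M \<longrightarrow> (\<lambda>x. f [x, x]) \<in> M"
    and F: "(n, f) \<in> star M" and us: "length us = n" "set us \<subseteq> M"
  shows "(\<lambda>x. f (map (\<lambda>u. u x) us)) \<in> M"
proof -
  define g where "g = (\<lambda>xs. f (map (\<lambda>j. (us ! j) (xs ! j)) [0..<n]))"
  have n1: "1 \<le> n" using F by (simp add: star_def)
  have "(n, g) \<in> star M"
  proof (rule star_memI[OF n1])
    fix bs :: "'a list" and i assume bs: "length bs = n" "i < n"
    define cs where "cs = map (\<lambda>j. (us ! j) (bs ! j)) [0..<n]"
    have eq: "\<And>x. map (\<lambda>j. (us ! j) (bs[i := x] ! j)) [0..<n] = cs[i := (us ! i) x]"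
      by (rule nth_equalityI) (auto simp: cs_def bs nth_list_update)
    have "(\<lambda>y. f (cs[i := y])) \<in> M" using star_trl[OF F, of cs i] bs by (simp add: cs_def)
    moreover have "us ! i \<in> M" using us bs by auto
    ultimately have "(\<lambda>y. f (cs[i := y])) \<circ> (us ! i) \<in> M" using mon by (simp add: is_monoid_def)
    then show "(\<lambda>x. g (bs[i := x])) \<in> M" by (simp add: g_def eq comp_def)
  qed
  then have "(\<lambda>x. g (replicate n x)) \<in> M" using diag_rep[OF mon bin] by blast
  moreover have "\<And>x. g (replicate n x) = f (map (\<lambda>u. u x) us)"
  proof -
    fix x
    have "map (\<lambda>j. (us ! j) (replicate n x ! j)) [0..<n] = map (\<lambda>u. u x) us"
      by (rule nth_equalityI) (auto simp: us)
    then show "g (replicate n x) = f (map (\<lambda>u. u x) us)" by (simp add: g_def)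
  qed
  ultimately show ?thesis by simp
qed

lemma iii_clone:
  fixes M :: "('a \<Rightarrow> 'a) set"
  assumes mon: "is_monoid M" and C: "constants \<subseteq> M"
    and bin: "\<forall>f. (2, f) \<in> star M \<longrightarrow> (\<lambda>x. f [x, x]) \<in> M"
  shows "is_clone (star M)"
  unfolding is_clone_def
proof (intro conjI allI impI ballI)
  fix G assume "G \<in> star M" then show "1 \<le> fst G" by (simp add: star_def)
next
  fix n i :: nat assume h: "1 \<le> n \<and> i < n"
  show "(n, \<lambda>xs. xs ! i) \<in> star M"
  proof (rule star_memI)
    fix bs :: "'a list" and j assume bs: "length bs = n" "j < n"
    show "(\<lambda>x. bs[j := x] ! i) \<in> M"
    proof (cases "j = i")
      case True
      then have "(\<lambda>x. bs[j := x] ! i) = id" using bs by (auto simp: fun_eq_iff)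
      then show ?thesis using mon by (simp add: is_monoid_def)
    next
      case False
      then have "(\<lambda>x. bs[j := x] ! i) = (\<lambda>x. bs ! i)" by (auto simp: fun_eq_iff)
      moreover have "(\<lambda>x. bs ! i) \<in> constants" by (auto simp: constants_def)
      ultimately show ?thesis using C by auto
    qed
  qed (use h in simp)
next
  fix n f m gs assume h: "(n, f) \<in> star M \<and> 1 \<le> m \<and> length gs = n \<and> (\<forall>g\<in>set gs. (m, g) \<in> star M)"
  show "(m, \<lambda>xs. f (map (\<lambda>g. g xs) gs)) \<in> star M"
  proof (rule star_memI)
    fix bs :: "'a list" and i assume bs: "length bs = m" "i < m"
    define us where "us = map (\<lambda>g y. g (bs[i := y])) gs"
    have "set us \<subseteq> M" using h bs star_trl unfolding us_def by fastforce
    moreover have "length us = n" using h by (simp add: us_def)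
    ultimately have "(\<lambda>x. f (map (\<lambda>u. u x) us)) \<in> M" using diag_map[OF mon bin] h by blast
    then show "(\<lambda>x. f (map (\<lambda>g. g (bs[i := x])) gs)) \<in> M" by (simp add: us_def comp_def)
  qed (use h in simp)
qed

lemma clone_iii:
  fixes M :: "('a \<Rightarrow> 'a) set"
  assumes cl: "is_clone (star M)"
  shows "constants \<subseteq> M \<and> (\<forall>f. (2, f) \<in> star M \<longrightarrow> (\<lambda>x. f [x, x]) \<in> M)"
proof (intro conjI allI impI subsetI)
  fix t :: "'a \<Rightarrow> 'a" assume "t \<in> constants"
  then obtain c where c: "t = (\<lambda>x. c)" by (auto simp: constants_def)
  have "(2::nat, \<lambda>xs. xs ! 0) \<in> star M" using clone_proj[OF cl, of 2 0] by simp
  from star_trl[OF this, of "[c, c]" 1] have "(\<lambda>x. [c, c][1 := x] ! 0) \<in> M" by simp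
  then show "t \<in> M" using c by simp
next
  fix f assume f: "(2, f) \<in> star M"
  have p: "(1::nat, \<lambda>xs. xs ! 0) \<in> star M" using clone_proj[OF cl, of 1 0] by simp
  have "(1, \<lambda>xs. f (map (\<lambda>g. g xs) [\<lambda>xs. xs ! 0, \<lambda>xs. xs ! 0])) \<in> star M"
    by (rule clone_comp[OF cl f]) (use p in auto)
  then have "(1, \<lambda>xs. f [xs ! 0, xs ! 0]) \<in> star M" by simp
  then have "(\<lambda>x. (\<lambda>xs. f [xs ! 0, xs ! 0]) [x]) \<in> M" using star_unary by blast
  then show "(\<lambda>x. f [x, x]) \<in> M" by simp
qed



lemma Gamma_iff: "r \<in> Gamma as M \<longleftrightarrow> (\<exists>g\<in>M. r = map g as)"
  unfolding Gamma_def by auto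

lemma Pol_clone:
  assumes len: "\<forall>r\<in>\<rho>. length r = m"
  shows "is_clone (Pol m \<rho>)"
  unfolding is_clone_def
proof (intro conjI allI impI ballI)
  fix G assume "G \<in> Pol m \<rho>" then show "1 \<le> fst G" by (simp add: Pol_def)
next
  fix n i :: nat assume h: "1 \<le> n \<and> i < n"
  show "(n, \<lambda>xs. xs ! i) \<in> Pol m \<rho>"
    unfolding Pol_def
  proof (intro CollectI conjI allI impI)
    fix rs :: "'a list list" assume rs: "length rs = fst (n, \<lambda>xs. xs ! i) \<and> set rs \<subseteq> \<rho>"
    then have ri: "rs ! i \<in> \<rho>" using h by auto
    have "map (\<lambda>j. snd (n, \<lambda>xs. xs ! i) (map (\<lambda>r. r ! j) rs)) [0..<m] = rs ! i"
      by (rule nth_equalityI) (use rs h len ri in auto)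
    then show "map (\<lambda>j. snd (n, \<lambda>xs. xs ! i) (map (\<lambda>r. r ! j) rs)) [0..<m] \<in> \<rho>" using ri by simp
  qed (use h in simp)
next
  fix n f m' gs assume h: "(n, f) \<in> Pol m \<rho> \<and> 1 \<le> m' \<and> length gs = n \<and> (\<forall>g\<in>set gs. (m', g) \<in> Pol m \<rho>)"
  show "(m', \<lambda>xs. f (map (\<lambda>g. g xs) gs)) \<in> Pol m \<rho>"
    unfolding Pol_def
  proof (intro CollectI conjI allI impI)
    fix rs :: "'a list list" assume rs: "length rs = fst (m', \<lambda>xs. f (map (\<lambda>g. g xs) gs)) \<and> set rs \<subseteq> \<rho>"
    define ss where "ss = map (\<lambda>g. map (\<lambda>j. g (map (\<lambda>r. r ! j) rs)) [0..<m]) gs"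
    have "set ss \<subseteq> \<rho>"
    proof
      fix s assume "s \<in> set ss"
      then obtain g where g: "g \<in> set gs" "s = map (\<lambda>j. g (map (\<lambda>r. r ! j) rs)) [0..<m]"
        by (auto simp: ss_def)
      then have "(m', g) \<in> Pol m \<rho>" using h by blast
      then show "s \<in> \<rho>" using rs g unfolding Pol_def by auto
    qed
    moreover have "length ss = n" using h by (simp add: ss_def)
    ultimately have "map (\<lambda>j. f (map (\<lambda>s. s ! j) ss)) [0..<m] \<in> \<rho>"
      using h unfolding Pol_def by auto
    moreover have "map (\<lambda>j. f (map (\<lambda>s. s ! j) ss)) [0..<m] =
        map (\<lambda>j. f (map (\<lambda>g. g (map (\<lambda>r. r ! j) rs)) gs)) [0..<m]"
      by (rule map_cong) (auto simp: ss_def comp_def)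
    ultimately show "map (\<lambda>j. snd (m', \<lambda>xs. f (map (\<lambda>g. g xs) gs)) (map (\<lambda>r. r ! j) rs)) [0..<m] \<in> \<rho>"
      by simp
  qed (use h in simp)
qed

lemma clone_ii:
  fixes M :: "('a \<Rightarrow> 'a) set"
  assumes mon: "is_monoid M" and U: "set as = UNIV" and cl: "is_clone (star M)"
  shows "star M = Pol (length as) (Gamma as M)"
proof -
  have C: "constants \<subseteq> M" and bin: "\<forall>f. (2, f) \<in> star M \<longrightarrow> (\<lambda>x. f [x, x]) \<in> M"
    using clone_iii[OF cl] by auto
  show ?thesis
  proof (intro equalityI subsetI)
    fix F assume F: "F \<in> star M"
    obtain n f where nf: "F = (n, f)" by (cases F)
    have n1: "1 \<le> n" using F nf by (simp add: star_def)
    show "F \<in> Pol (length as) (Gamma as M)"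
      unfolding Pol_def nf
    proof (intro CollectI conjI allI impI)
      fix rs :: "'a list list" assume rs: "length rs = fst (n, f) \<and> set rs \<subseteq> Gamma as M"
      have "\<forall>k<n. \<exists>g. g \<in> M \<and> rs ! k = map g as"
      proof (intro allI impI)
        fix k assume "k < n" then have "rs ! k \<in> Gamma as M" using rs by auto
        then show "\<exists>g. g \<in> M \<and> rs ! k = map g as" unfolding Gamma_iff by blast
      qed
      then obtain G where G: "\<And>k. k < n \<Longrightarrow> G k \<in> M \<and> rs ! k = map (G k) as" by metis
      define us where "us = map G [0..<n]"
      have "set us \<subseteq> M" using G by (auto simp: us_def)
      moreover have "length us = n" by (simp add: us_def)
      ultimately have h: "(\<lambda>x. f (map (\<lambda>u. u x) us)) \<in> M"
        using diag_map[OF mon bin F[unfolded nf]] by blast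
      have "map (\<lambda>j. snd (n, f) (map (\<lambda>r. r ! j) rs)) [0..<length as] = map (\<lambda>x. f (map (\<lambda>u. u x) us)) as"
      proof (rule nth_equalityI)
        fix j assume "j < length (map (\<lambda>j. snd (n, f) (map (\<lambda>r. r ! j) rs)) [0..<length as])"
        then have j: "j < length as" by simp
        have "map (\<lambda>r. r ! j) rs = map (\<lambda>u. u (as ! j)) us"
          by (rule nth_equalityI) (use rs G j in \<open>auto simp: us_def\<close>)
        then show "map (\<lambda>j. snd (n, f) (map (\<lambda>r. r ! j) rs)) [0..<length as] ! j = map (\<lambda>x. f (map (\<lambda>u. u x) us)) as ! j"
          using j by simp
      qed simp
      then show "map (\<lambda>j. snd (n, f) (map (\<lambda>r. r ! j) rs)) [0..<length as] \<in> Gamma as M"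
        using h by (auto simp: Gamma_iff)
    qed (use n1 in simp)
  next
    fix F assume F: "F \<in> Pol (length as) (Gamma as M)"
    obtain n f where nf: "F = (n, f)" by (cases F)
    have n1: "1 \<le> n" using F nf by (simp add: Pol_def)
    show "F \<in> star M" unfolding nf
    proof (rule star_memI[OF n1])
      fix bs :: "'a list" and i assume bs: "length bs = n" "i < n"
      define rs where "rs = map (\<lambda>k. if k = i then as else map (\<lambda>_. bs ! k) as) [0..<n]"
      have idM: "id \<in> M" using mon by (simp add: is_monoid_def)
      have "set rs \<subseteq> Gamma as M"
      proof
        fix r assume "r \<in> set rs"
        then obtain k where "r = (if k = i then as else map (\<lambda>_. bs ! k) as)" unfolding rs_def set_map by blast
        moreover have "as = map id as" by simp
        moreover have "(\<lambda>_. bs ! k) \<in> M" using C by (auto simp: constants_def)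
        ultimately show "r \<in> Gamma as M" using idM unfolding Gamma_iff by metis
      qed
      moreover have "length rs = n" by (simp add: rs_def)
      ultimately have "map (\<lambda>j. f (map (\<lambda>r. r ! j) rs)) [0..<length as] \<in> Gamma as M"
        using F nf unfolding Pol_def by auto
      then obtain g where g: "g \<in> M" "map (\<lambda>j. f (map (\<lambda>r. r ! j) rs)) [0..<length as] = map g as"
        by (auto simp: Gamma_iff)
      have "map (\<lambda>j. f (map (\<lambda>r. r ! j) rs)) [0..<length as] = map (\<lambda>x. f (bs[i := x])) as"
      proof (rule nth_equalityI)
        fix j assume "j < length (map (\<lambda>j. f (map (\<lambda>r. r ! j) rs)) [0..<length as])"
        then have j: "j < length as" by simp
        have "map (\<lambda>r. r ! j) rs = bs[i := as ! j]"
          by (rule nth_equalityI) (use bs j in \<open>auto simp: rs_def nth_list_update\<close>)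
        then show "map (\<lambda>j. f (map (\<lambda>r. r ! j) rs)) [0..<length as] ! j = map (\<lambda>x. f (bs[i := x])) as ! j"
          using j by simp
      qed simp
      then have "g = (\<lambda>x. f (bs[i := x]))" using g map_eq_UNIV[OF U] by metis
      then show "(\<lambda>x. f (bs[i := x])) \<in> M" using g by simp
    qed
  qed
qed



lemma map_as_eq: "map g as = map (\<lambda>j. X j) [0..<length as] \<Longrightarrow> j < length as \<Longrightarrow> g (as ! j) = X j"
  by (metis (no_types, lifting) diff_zero length_upt nth_map nth_upt plus_nat.add_0)

lemma iii_gq:
  fixes M :: "('a \<Rightarrow> 'a) set"
  assumes D: "distinct as" and U: "set as = UNIV" and C: "constants \<subseteq> M"
    and bin: "\<forall>f. (2, f) \<in> star M \<longrightarrow> (\<lambda>x. f [x, x]) \<in> M"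
  shows "gen_quasiorder (length as) (Gamma as M)"
  unfolding gen_quasiorder_def
proof (intro conjI allI impI)
  let ?m = "length as"
  fix a :: 'a
  have "(\<lambda>_. a) \<in> M" using C by (auto simp: constants_def)
  moreover have "replicate ?m a = map (\<lambda>_. a) as" by (simp add: map_replicate_const)
  ultimately show "replicate ?m a \<in> Gamma as M" unfolding Gamma_iff by blast
next
  let ?m = "length as"
  fix X :: "nat \<Rightarrow> nat \<Rightarrow> 'a"
  assume h: "(\<forall>i<?m. map (X i) [0..<?m] \<in> Gamma as M) \<and> (\<forall>j<?m. map (\<lambda>i. X i j) [0..<?m] \<in> Gamma as M)"
  have "\<forall>i<?m. \<exists>g. g \<in> M \<and> map g as = map (X i) [0..<?m]"
    using h unfolding Gamma_iff by metis
  then obtain G where G: "\<And>i. i < ?m \<Longrightarrow> G i \<in> M \<and> map (G i) as = map (X i) [0..<?m]" by metis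
  have "\<forall>j<?m. \<exists>g. g \<in> M \<and> map g as = map (\<lambda>i. X i j) [0..<?m]"
    using h unfolding Gamma_iff by metis
  then obtain H where H: "\<And>j. j < ?m \<Longrightarrow> H j \<in> M \<and> map (H j) as = map (\<lambda>i. X i j) [0..<?m]" by metis
  define idx where "idx = (\<lambda>x. SOME i. i < ?m \<and> as ! i = x)"
  have idx: "\<And>x. idx x < ?m \<and> as ! idx x = x"
  proof -
    fix x
    have "\<exists>i. i < ?m \<and> as ! i = x" using U by (metis UNIV_I in_set_conv_nth)
    then show "idx x < ?m \<and> as ! idx x = x" unfolding idx_def by (rule someI_ex)
  qed
  have idx2: "\<And>i. i < ?m \<Longrightarrow> idx (as ! i) = i"
    using idx D by (meson nth_eq_iff_index_eq)
  have GX: "\<And>i x. i < ?m \<Longrightarrow> G i x = X i (idx x)"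
    using G idx map_as_eq by metis
  have HX: "\<And>j x. j < ?m \<Longrightarrow> H j x = X (idx x) j"
  proof -
    fix j x assume "j < ?m"
    then have "map (H j) as = map (\<lambda>i. X i j) [0..<?m]" using H by blast
    then show "H j x = X (idx x) j" using idx map_as_eq[of "H j" as "\<lambda>i. X i j"] by metis
  qed
  define f where "f = (\<lambda>xs. X (idx (xs ! 0)) (idx (xs ! 1)))"
  have "(2, f) \<in> star M"
  proof (rule star_memI)
    fix ys :: "'a list" and j assume ys: "length ys = (2::nat)" "j < (2::nat)"
    then obtain y0 y1 where y: "ys = [y0, y1]"
      by (metis One_nat_def Suc_1 length_0_conv length_Suc_conv)
    show "(\<lambda>x. f (ys[j := x])) \<in> M"
    proof (cases j)
      case 0
      have "(\<lambda>x. f (ys[j := x])) = H (idx y1)"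
        using 0 y HX idx by (auto simp: f_def fun_eq_iff)
      then show ?thesis using H idx by metis
    next
      case (Suc j')
      then have "j = 1" using ys by simp
      have "(\<lambda>x. f (ys[j := x])) = G (idx y0)"
        using \<open>j = 1\<close> y GX idx by (auto simp: f_def fun_eq_iff)
      then show ?thesis using G idx by metis
    qed
  qed simp
  then have d: "(\<lambda>x. f [x, x]) \<in> M" using bin by blast
  have "map (\<lambda>i. X i i) [0..<?m] = map (\<lambda>x. f [x, x]) as"
    by (rule nth_equalityI) (auto simp: f_def idx2)
  then show "map (\<lambda>i. X i i) [0..<?m] \<in> Gamma as M" using d unfolding Gamma_iff by blast
qed

lemma gq_iii:
  fixes M :: "('a \<Rightarrow> 'a) set"
  assumes U: "set as = UNIV" and gq: "gen_quasiorder (length as) (Gamma as M)"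
  shows "constants \<subseteq> M \<and> (\<forall>f. (2, f) \<in> star M \<longrightarrow> (\<lambda>x. f [x, x]) \<in> M)"
proof (intro conjI allI impI subsetI)
  let ?m = "length as"
  fix t :: "'a \<Rightarrow> 'a" assume "t \<in> constants"
  then obtain c where c: "t = (\<lambda>x. c)" by (auto simp: constants_def)
  have "replicate ?m c \<in> Gamma as M" using gq unfolding gen_quasiorder_def by blast
  then obtain g where g: "g \<in> M" "replicate ?m c = map g as" unfolding Gamma_iff by blast
  then have "map g as = map (\<lambda>x. c) as" by (simp add: map_replicate_const)
  then have "g = (\<lambda>x. c)" using map_eq_UNIV[OF U] by blast
  then show "t \<in> M" using g c by simp
next
  let ?m = "length as"
  fix f assume f: "(2, f) \<in> star M"
  define X where "X = (\<lambda>i j. f [as ! i, as ! j])"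
  have rows: "\<forall>i<?m. map (\<lambda>j. X i j) [0..<?m] \<in> Gamma as M"
  proof (intro allI impI)
    fix i assume i: "i < ?m"
    have "(\<lambda>x. f ([as ! i, as ! i][1 := x])) \<in> M" using star_trl[OF f, of "[as ! i, as ! i]" 1] by simp
    then have "(\<lambda>x. f [as ! i, x]) \<in> M" by simp
    moreover have "map (\<lambda>j. X i j) [0..<?m] = map (\<lambda>x. f [as ! i, x]) as"
      by (rule nth_equalityI) (auto simp: X_def)
    ultimately show "map (\<lambda>j. X i j) [0..<?m] \<in> Gamma as M" unfolding Gamma_iff by blast
  qed
  have cols: "\<forall>j<?m. map (\<lambda>i. X i j) [0..<?m] \<in> Gamma as M"
  proof (intro allI impI)
    fix j assume j: "j < ?m"
    have "(\<lambda>x. f ([as ! j, as ! j][0 := x])) \<in> M" using star_trl[OF f, of "[as ! j, as ! j]" 0] by simp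
    then have "(\<lambda>x. f [x, as ! j]) \<in> M" by simp
    moreover have "map (\<lambda>i. X i j) [0..<?m] = map (\<lambda>x. f [x, as ! j]) as"
      by (rule nth_equalityI) (auto simp: X_def)
    ultimately show "map (\<lambda>i. X i j) [0..<?m] \<in> Gamma as M" unfolding Gamma_iff by blast
  qed
  have "map (\<lambda>i. X i i) [0..<?m] \<in> Gamma as M"
    using gq rows cols unfolding gen_quasiorder_def by blast
  then obtain g where g: "g \<in> M" "map (\<lambda>i. X i i) [0..<?m] = map g as" unfolding Gamma_iff by blast
  have "map (\<lambda>i. X i i) [0..<?m] = map (\<lambda>x. f [x, x]) as"
    by (rule nth_equalityI) (auto simp: X_def)
  then have "g = (\<lambda>x. f [x, x])" using g map_eq_UNIV[OF U] by metis
  then show "(\<lambda>x. f [x, x]) \<in> M" using g by simp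
qed


theorem proposition3p9:
  fixes M :: "('a::finite \<Rightarrow> 'a) set" and as :: "'a list"
  assumes enum: "distinct as" "set as = UNIV"
    and mon: "is_monoid M"
  shows "(u_closed M \<longleftrightarrow> is_clone (star M))
       \<and> (u_closed M \<longleftrightarrow> star M = Pol (length as) (Gamma as M))
       \<and> (u_closed M \<longleftrightarrow> constants \<subseteq> M \<and>
             (\<forall>f. (2, f) \<in> star M \<longrightarrow> (\<lambda>x. f [x, x]) \<in> M))
       \<and> (u_closed M \<longleftrightarrow> gen_quasiorder (length as) (Gamma as M))"
proof -
  have A: "u_closed M \<longleftrightarrow> is_clone (star M)" by (rule uclosed_iff[OF mon])
  have B: "is_clone (star M) \<longleftrightarrow> constants \<subseteq> M \<and>
             (\<forall>f. (2, f) \<in> star M \<longrightarrow> (\<lambda>x. f [x, x]) \<in> M)"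
    using clone_iii[of M] iii_clone[OF mon] by blast
  have len: "\<forall>r\<in>Gamma as M. length r = length as" by (auto simp: Gamma_iff)
  have C: "is_clone (star M) \<longleftrightarrow> star M = Pol (length as) (Gamma as M)"
    using clone_ii[OF mon enum(2)] Pol_clone[OF len] by metis
  have D: "(constants \<subseteq> M \<and> (\<forall>f. (2, f) \<in> star M \<longrightarrow> (\<lambda>x. f [x, x]) \<in> M))
      \<longleftrightarrow> gen_quasiorder (length as) (Gamma as M)"
    using iii_gq[OF enum, of M] gq_iii[OF enum(2), of M] by blast
  show ?thesis using A B C D by blast
qed

end
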